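(* Fix $H$, $T$, an integer $A_{\mathcal X}>H$, and $\delta\in(0,1/4)$. Let $K=\lfloor A_{\mathcal X}/H\rfloor$ if $A_{\mathcal X}\ge2H$ and $K=2$ otherwise, and assume $T\ge0.4K\log(1/(4\delta))$. There is a universal constant $c>0$ such that for any max-player algorithm there exists a game (with horizon $H$, perfect recall, deterministic rewards in $[0,1]$, total number of max-player actions $A_{\mathcal X}$, in which the min-player's actions affect neither transitions nor rewards) such that with probability greater than $\delta$ the algorithm's regret satisfies $$\mathrm{Reg}^T_{\max}\ge c\sqrt{(A_{\mathcal X}-H)\min\{A_{\mathcal X}-H,H\}\,T\log(1/(4\delta))}.$$ (If $A_{\mathcal X}<H$, no such game exists.)
   Context: An episodic two-player zero-sum imperfect-information game with horizon $H$ and perfect recall: the max-player has information sets $\mathcal X=\bigsqcup_{h=1}^H\mathcal X_h$ with finite action sets $\mathcal A(x)$ (sizes allowed to vary), $A_{\mathcal X}=\sum_x|\mathcal A(x)|$; every information set has a unique history of previous own information sets and actions, and every (information set, action) pair at depth $h<H$ is followed by at least one information set at depth $h+1$. Rewards $r_h\in[0,1]$ go to the max-player. A max-player algorithm is a sequence of measurable maps $\mathcal L^t$ sending the observed history $(x^u_h,a^u_h,r^u_h)_{u<t,h\le H}$ to a policy $\mu^t$ used in episode $t$. With $V^{\mu,\nu}=\mathbb E^{\mu,\nu}[\sum_hr_h]$ and opponent policies $\nu^t$, the regret is $\mathrm{Reg}^T_{\max}=\max_{\mu^\dagger}\sum_{t=1}^T(V^{\mu^\dagger,\nu^t}-V^{\mu^t,\nu^t})$.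 *)

theory Defs
  imports "HOL-Probability.Probability"
begin

text \<open>
  IX: the information sets; ilev x: the depth h of x; iact x: the action set A(x);
  ipar x: for an information set of depth at least 2, its (unique) preceding own
  information set and action (perfect recall).
\<close>
record infostruct =
  IX   :: "nat set"
  ilev :: "nat \<Rightarrow> nat"
  iact :: "nat \<Rightarrow> nat set"
  ipar :: "nat \<Rightarrow> nat \<times> nat"

definition wf_struct :: "nat \<Rightarrow> infostruct \<Rightarrow> bool" where
  "wf_struct H S \<longleftrightarrow>
     finite (IX S) \<and>
     (\<forall>x\<in>IX S. 1 \<le> ilev S x \<and> ilev S x \<le> H \<and> finite (iact S x) \<and> iact S x \<noteq> {}) \<and>
     (\<forall>x\<in>IX S. 2 \<le> ilev S x \<longrightarrow>
        fst (ipar S x) \<in> IX S \<and> ilev S (fst (ipar S x)) = ilev S x - 1 \<and>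
        snd (ipar S x) \<in> iact S (fst (ipar S x))) \<and>
     (\<forall>x\<in>IX S. \<forall>a\<in>iact S x. ilev S x < H \<longrightarrow>
        (\<exists>x'\<in>IX S. ilev S x' = ilev S x + 1 \<and> ipar S x' = (x, a)))"

definition num_actions :: "infostruct \<Rightarrow> nat" where
  "num_actions S = (\<Sum>x\<in>IX S. card (iact S x))"

text \<open>
  A game in which the min-player's actions affect neither transitions nor rewards
  (so the min-player is not modelled).  Hidden states are naturals; obs s is the
  max-player information set of state s; init is the initial state distribution;
  trans h s a the transition kernel at step h; rew h s a the deterministic reward.
\<close>
record game =
  gstruct :: infostruct
  obs     :: "nat \<Rightarrow> nat"
  init    :: "nat pmf"
  trans   :: "nat \<Rightarrow> nat \<Rightarrow> nat \<Rightarrow> nat pmf"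
  rew     :: "nat \<Rightarrow> nat \<Rightarrow> nat \<Rightarrow> real"

definition wf_game :: "nat \<Rightarrow> game \<Rightarrow> bool" where
  "wf_game H g \<longleftrightarrow>
     wf_struct H (gstruct g) \<and>
     (\<forall>s\<in>set_pmf (init g). obs g s \<in> IX (gstruct g) \<and> ilev (gstruct g) (obs g s) = 1) \<and>
     (\<forall>h s a. obs g s \<in> IX (gstruct g) \<and> ilev (gstruct g) (obs g s) = h \<and> h < H \<and>
        a \<in> iact (gstruct g) (obs g s) \<longrightarrow>
        (\<forall>s'\<in>set_pmf (trans g h s a).
           obs g s' \<in> IX (gstruct g) \<and> ilev (gstruct g) (obs g s') = h + 1 \<and>
           ipar (gstruct g) (obs g s') = (obs g s, a))) \<and>
     (\<forall>h s a. 0 \<le> rew g h s a \<and> rew g h s a \<le> 1)"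

type_synonym policy = "nat \<Rightarrow> nat pmf"
type_synonym trace = "(nat \<times> nat \<times> real) list"

definition valid_policy :: "infostruct \<Rightarrow> policy \<Rightarrow> bool" where
  "valid_policy S \<mu> \<longleftrightarrow> (\<forall>x\<in>IX S. set_pmf (\<mu> x) \<subseteq> iact S x)"

text \<open>Play from step h in state s for k remaining steps, recording (x_h, a_h, r_h).\<close>
primrec ep :: "game \<Rightarrow> policy \<Rightarrow> nat \<Rightarrow> nat \<Rightarrow> nat \<Rightarrow> trace pmf" where
  "ep g \<mu> h 0 s = return_pmf []"
| "ep g \<mu> h (Suc k) s =
     bind_pmf (\<mu> (obs g s)) (\<lambda>a.
       bind_pmf (if k = 0 then return_pmf [] else bind_pmf (trans g h s a) (ep g \<mu> (Suc h) k))
         (\<lambda>rest. return_pmf ((obs g s, a, rew g h s a) # rest)))"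

definition episode :: "nat \<Rightarrow> game \<Rightarrow> policy \<Rightarrow> trace pmf" where
  "episode H g \<mu> = bind_pmf (init g) (ep g \<mu> 1 H)"

definition val :: "nat \<Rightarrow> game \<Rightarrow> policy \<Rightarrow> real" where
  "val H g \<mu> = measure_pmf.expectation (episode H g \<mu>) (\<lambda>tr. sum_list (map (\<lambda>(x, a, r). r) tr))"

text \<open>
  A max-player algorithm: L S t hist is the policy mu^t used in episode t (0-indexed)
  given the observed history hist of the previous episodes; it may depend on the
  (known) information structure S.
\<close>
type_synonym algorithm = "infostruct \<Rightarrow> nat \<Rightarrow> trace list \<Rightarrow> policy"

definition valid_alg :: "nat \<Rightarrow> algorithm \<Rightarrow> bool" where
  "valid_alg H L \<longleftrightarrow> (\<forall>S t hist. wf_struct H S \<longrightarrow> valid_policy S (L S t hist))"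

primrec run :: "nat \<Rightarrow> game \<Rightarrow> algorithm \<Rightarrow> nat \<Rightarrow> trace list pmf" where
  "run H g L 0 = return_pmf []"
| "run H g L (Suc t) =
     bind_pmf (run H g L t) (\<lambda>hist.
       bind_pmf (episode H g (L (gstruct g) t hist)) (\<lambda>e. return_pmf (hist @ [e])))"

definition regret :: "nat \<Rightarrow> game \<Rightarrow> algorithm \<Rightarrow> nat \<Rightarrow> trace list \<Rightarrow> real" where
  "regret H g L T hist =
     (SUP \<mu>\<in>{\<mu>. valid_policy (gstruct g) \<mu>}.
        \<Sum>t<T. val H g \<mu> - val H g (L (gstruct g) t (take t hist)))"

end

theory Submission
  imports Defs
begin


fun arun :: "(nat \<Rightarrow> 'e list \<Rightarrow> 'e pmf) \<Rightarrow> nat \<Rightarrow> 'e list pmf" where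
  "arun E 0 = return_pmf []"
| "arun E (Suc t) = bind_pmf (arun E t) (\<lambda>h. bind_pmf (E t h) (\<lambda>e. return_pmf (h @ [e])))"

definition bpmf :: "nat \<Rightarrow> real \<Rightarrow> nat \<Rightarrow> bool pmf" where
  "bpmf j p a = bernoulli_pmf (if a = j then p else 1/2)"

definition EPg :: "(nat \<Rightarrow> 'e list \<Rightarrow> nat pmf) \<Rightarrow> (nat \<Rightarrow> 'e list \<Rightarrow> nat \<Rightarrow> bool \<Rightarrow> 'e pmf)
   \<Rightarrow> nat \<Rightarrow> real \<Rightarrow> nat \<Rightarrow> 'e list \<Rightarrow> 'e pmf" where
  "EPg \<pi> Q j p t h = bind_pmf (\<pi> t h) (\<lambda>a. bind_pmf (bpmf j p a) (\<lambda>b. Q t h a b))"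

definition rho1 :: "('e \<Rightarrow> nat) \<Rightarrow> ('e \<Rightarrow> bool) \<Rightarrow> nat \<Rightarrow> real \<Rightarrow> 'e \<Rightarrow> real" where
  "rho1 arm bt j p e = (if arm e = j then (if bt e then 1/(2*p) else 1/(2*(1-p))) else 1)"

definition rho :: "('e \<Rightarrow> nat) \<Rightarrow> ('e \<Rightarrow> bool) \<Rightarrow> nat \<Rightarrow> real \<Rightarrow> 'e list \<Rightarrow> real" where
  "rho arm bt j p h = prod_list (map (rho1 arm bt j p) h)"

lemma rho1_pos: "0 < p \<Longrightarrow> p < 1 \<Longrightarrow> 0 < rho1 arm bt j p e"
  by (auto simp: rho1_def)

lemma rho_pos: "0 < p \<Longrightarrow> p < 1 \<Longrightarrow> 0 < rho arm bt j p h"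
  unfolding rho_def by (induction h) (auto simp: rho1_pos)

lemma rho_snoc: "rho arm bt j p (h @ [e]) = rho arm bt j p h * rho1 arm bt j p e"
  by (simp add: rho_def)

lemma CM_ep:
  assumes p: "0 < p" "p < 1"
    and supp: "\<And>a b e. e \<in> set_pmf (Q t h a b) \<Longrightarrow> arm e = a \<and> bt e = b"
  shows "(\<integral>\<^sup>+e. f e \<partial>EPg \<pi> Q j (1/2) t h) = (\<integral>\<^sup>+e. f e * ennreal (rho1 arm bt j p e) \<partial>EPg \<pi> Q j p t h)"
proof -
  have inner: "(\<integral>\<^sup>+e. f e * ennreal (rho1 arm bt j p e) \<partial>Q t h a b)
      = ennreal (rho1 arm bt j p e0) * (\<integral>\<^sup>+e. f e \<partial>Q t h a b)"
    if "arm e0 = a" "bt e0 = b" for a b e0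
  proof -
    have "(\<integral>\<^sup>+e. f e * ennreal (rho1 arm bt j p e) \<partial>Q t h a b)
        = (\<integral>\<^sup>+e. ennreal (rho1 arm bt j p e0) * f e \<partial>Q t h a b)"
      apply (intro nn_integral_cong_AE AE_pmfI)
      using supp that by (auto simp: rho1_def mult.commute)
    also have "\<dots> = ennreal (rho1 arm bt j p e0) * (\<integral>\<^sup>+e. f e \<partial>Q t h a b)"
      by (simp add: nn_integral_cmult)
    finally show ?thesis .
  qed
  show ?thesis
    unfolding EPg_def nn_integral_bind_pmf
  proof (intro nn_integral_cong)
    fix a
    define F where "F b = (\<integral>\<^sup>+e. f e \<partial>Q t h a b)" for b
    show "(\<integral>\<^sup>+b. \<integral>\<^sup>+e. f e \<partial>Q t h a b \<partial>bpmf j (1/2) a) =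
          (\<integral>\<^sup>+b. \<integral>\<^sup>+e. f e * ennreal (rho1 arm bt j p e) \<partial>Q t h a b \<partial>bpmf j p a)"
    proof (cases "a = j")
      case True
      have eq: "(\<integral>\<^sup>+e. f e * ennreal (rho1 arm bt j p e) \<partial>Q t h a b)
          = ennreal (if b then 1/(2*p) else 1/(2*(1-p))) * F b" for b
      proof (cases "set_pmf (Q t h a b) = {}")
        case True then show ?thesis by (simp add: set_pmf_not_empty)
      next
        case False
        then obtain e0 where "e0 \<in> set_pmf (Q t h a b)" by blast
        with supp[of e0 a b] show ?thesis
          using inner[of e0 a b] \<open>a = j\<close> by (auto simp: rho1_def F_def)
      qed
      have e1: "ennreal p * (ennreal (1/(2*p)) * X) = ennreal (1/2) * X" for X
      proof -
        have r: "p*(1/(2*p)) = (1/2::real)" using p by (simp add: field_simps)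
        have "ennreal p * (ennreal (1/(2*p)) * X) = ennreal (p*(1/(2*p))) * X"
          using p by (subst ennreal_mult) (auto simp: mult.assoc)
        also have "\<dots> = ennreal (1/2) * X" by (simp only: r)
        finally show ?thesis .
      qed
      have e2: "ennreal (1-p) * (ennreal (1/(2*(1-p))) * X) = ennreal (1/2) * X" for X
      proof -
        have r: "(1-p)*(1/(2*(1-p))) = (1/2::real)" using p by (simp add: field_simps)
        have "ennreal (1-p) * (ennreal (1/(2*(1-p))) * X) = ennreal ((1-p)*(1/(2*(1-p)))) * X"
          using p by (subst ennreal_mult) (auto simp: mult.assoc)
        also have "\<dots> = ennreal (1/2) * X" by (simp only: r)
        finally show ?thesis .
      qed
      have "(\<integral>\<^sup>+b. \<integral>\<^sup>+e. f e * ennreal (rho1 arm bt j p e) \<partial>Q t h a b \<partial>bpmf j p a)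
          = ennreal (1/(2*p)) * F True * ennreal p + ennreal (1/(2*(1-p))) * F False * ennreal (1-p)"
        unfolding bpmf_def eq using True p by (subst nn_integral_bernoulli_pmf) auto
      also have "\<dots> = ennreal (1/2) * F True + ennreal (1/2) * F False"
        using e1[of "F True"] e2[of "F False"] by (metis mult.commute mult.assoc)
      finally have "(\<integral>\<^sup>+b. \<integral>\<^sup>+e. f e * ennreal (rho1 arm bt j p e) \<partial>Q t h a b \<partial>bpmf j p a)
          = ennreal (1/2) * F True + ennreal (1/2) * F False" .
      moreover have "(\<integral>\<^sup>+b. \<integral>\<^sup>+e. f e \<partial>Q t h a b \<partial>bpmf j (1/2) a)
          = ennreal (1/2) * F True + ennreal (1/2) * F False"
        unfolding bpmf_def F_def by (subst nn_integral_bernoulli_pmf) (auto simp: mult.commute)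
      ultimately show ?thesis by simp
    next
      case False
      have eq: "(\<integral>\<^sup>+e. f e * ennreal (rho1 arm bt j p e) \<partial>Q t h a b) = F b" for b
      proof (cases "set_pmf (Q t h a b) = {}")
        case True then show ?thesis by (simp add: set_pmf_not_empty)
      next
        case False
        then obtain e0 where "e0 \<in> set_pmf (Q t h a b)" by blast
        with supp[of e0 a b] show ?thesis
          using inner[of e0 a b] \<open>a \<noteq> j\<close> by (auto simp: rho1_def F_def)
      qed
      show ?thesis using False unfolding bpmf_def by (simp add: eq F_def)
    qed
  qed
qed

lemma CM_run:
  assumes p: "0 < p" "p < 1"
    and supp: "\<And>t h a b e. e \<in> set_pmf (Q t h a b) \<Longrightarrow> arm e = a \<and> bt e = b"
  shows "(\<integral>\<^sup>+h. f h \<partial>arun (EPg \<pi> Q j (1/2)) t)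
       = (\<integral>\<^sup>+h. f h * ennreal (rho arm bt j p h) \<partial>arun (EPg \<pi> Q j p) t)"
proof (induction t arbitrary: f)
  case 0
  then show ?case by (simp add: rho_def)
next
  case (Suc t)
  have "(\<integral>\<^sup>+h. f h \<partial>arun (EPg \<pi> Q j (1/2)) (Suc t))
      = (\<integral>\<^sup>+h. (\<integral>\<^sup>+e. f (h @ [e]) \<partial>EPg \<pi> Q j (1/2) t h) \<partial>arun (EPg \<pi> Q j (1/2)) t)"
    by simp
  also have "\<dots> = (\<integral>\<^sup>+h. (\<integral>\<^sup>+e. f (h @ [e]) * ennreal (rho1 arm bt j p e) \<partial>EPg \<pi> Q j p t h) \<partial>arun (EPg \<pi> Q j (1/2)) t)"
    by (intro nn_integral_cong CM_ep[OF p supp])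
  also have "\<dots> = (\<integral>\<^sup>+h. (\<integral>\<^sup>+e. f (h @ [e]) * ennreal (rho1 arm bt j p e) \<partial>EPg \<pi> Q j p t h) * ennreal (rho arm bt j p h) \<partial>arun (EPg \<pi> Q j p) t)"
    by (rule Suc.IH)
  also have "\<dots> = (\<integral>\<^sup>+h. (\<integral>\<^sup>+e. f (h @ [e]) * ennreal (rho arm bt j p (h @ [e])) \<partial>EPg \<pi> Q j p t h) \<partial>arun (EPg \<pi> Q j p) t)"
  proof (intro nn_integral_cong)
    fix h
    show "(\<integral>\<^sup>+e. f (h @ [e]) * ennreal (rho1 arm bt j p e) \<partial>EPg \<pi> Q j p t h) * ennreal (rho arm bt j p h)
        = (\<integral>\<^sup>+e. f (h @ [e]) * ennreal (rho arm bt j p (h @ [e])) \<partial>EPg \<pi> Q j p t h)"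
      unfolding rho_snoc
      by (subst nn_integral_multc[symmetric]) 
         (auto intro!: nn_integral_cong simp: ennreal_mult' rho_pos[OF p, THEN less_imp_le] mult_ac)
  qed
  also have "\<dots> = (\<integral>\<^sup>+h. f h * ennreal (rho arm bt j p h) \<partial>arun (EPg \<pi> Q j p) (Suc t))"
    by simp
  finally show ?case .
qed

definition cnt :: "('e \<Rightarrow> nat) \<Rightarrow> nat \<Rightarrow> 'e list \<Rightarrow> nat" where
  "cnt arm j h = length (filter (\<lambda>e. arm e = j) h)"

lemma cnt_snoc: "cnt arm j (h @ [e]) = cnt arm j h + (if arm e = j then 1 else 0)"
  by (simp add: cnt_def)

definition rr :: "real \<Rightarrow> real" where "rr p = 1 / (4 * p * (1 - p))"

fun Wr :: "('e \<Rightarrow> nat) \<Rightarrow> ('e \<Rightarrow> bool) \<Rightarrow> nat \<Rightarrow> real \<Rightarrow> nat \<Rightarrow> 'e list \<Rightarrow> real" where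
  "Wr arm bt j p k [] = rr p ^ k"
| "Wr arm bt j p k (e # rh) = Wr arm bt j p k rh *
     (if arm e = j \<and> cnt arm j (rev rh) < k then rho1 arm bt j p e / rr p else 1)"

definition W :: "('e \<Rightarrow> nat) \<Rightarrow> ('e \<Rightarrow> bool) \<Rightarrow> nat \<Rightarrow> real \<Rightarrow> nat \<Rightarrow> 'e list \<Rightarrow> real" where
  "W arm bt j p k h = Wr arm bt j p k (rev h)"

lemma W_snoc: "W arm bt j p k (h @ [e]) = W arm bt j p k h *
     (if arm e = j \<and> cnt arm j h < k then rho1 arm bt j p e / rr p else 1)"
  by (simp add: W_def)

lemma rr_pos: "0 < p \<Longrightarrow> p < 1 \<Longrightarrow> 0 < rr p"
  by (simp add: rr_def)

lemma W_rho:
  assumes p: "0 < p" "p < 1"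
  shows "cnt arm j h \<le> k \<Longrightarrow> W arm bt j p k h = rho arm bt j p h * rr p ^ (k - cnt arm j h)"
proof (induction h rule: rev_induct)
  case Nil
  then show ?case by (simp add: W_def rho_def cnt_def)
next
  case (snoc e h)
  have c: "cnt arm j h \<le> k" using snoc.prems by (simp add: cnt_snoc split: if_splits)
  show ?case
  proof (cases "arm e = j")
    case True
    then have lt: "cnt arm j h < k" using snoc.prems by (simp add: cnt_snoc)
    then obtain m where m: "k - cnt arm j h = Suc m" by (metis Suc_diff_Suc)
    have "k - cnt arm j (h @ [e]) = m" using m True by (simp add: cnt_snoc)
    then show ?thesis using True lt snoc.IH[OF c] m rr_pos[OF p]
      by (simp add: W_snoc rho_snoc field_simps)
  next
    case False
    then show ?thesis using snoc.IH[OF c] by (simp add: W_snoc rho_snoc cnt_snoc rho1_def)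
  qed
qed

lemma rr_ge1: "0 < p \<Longrightarrow> p < 1 \<Longrightarrow> 1 \<le> rr p"
proof -
  assume p: "0 < p" "p < 1"
  have "4 * p * (1 - p) \<le> 1" using zero_le_power2[of "2*p-1"] by (simp add: power2_eq_square algebra_simps)
  moreover have "0 < 4 * p * (1 - p)" using p by simp
  ultimately show ?thesis by (simp add: rr_def)
qed

lemma rho_le_W:
  assumes p: "0 < p" "p < 1" and c: "cnt arm j h \<le> k"
  shows "rho arm bt j p h \<le> W arm bt j p k h"
  using W_rho[OF p c] rho_pos[OF p, of arm bt j h] rr_ge1[OF p]
  by (simp add: one_le_power)

lemma W_nonneg: "0 < p \<Longrightarrow> p < 1 \<Longrightarrow> 0 \<le> W arm bt j p k h"
proof -
  assume p: "0 < p" "p < 1"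
  have f: "0 \<le> (if c then rho1 arm bt j p e / rr p else 1)" for c e
    using rho1_pos[OF p, of arm bt j e] rr_pos[OF p] by auto
  have "0 \<le> Wr arm bt j p k rh" for rh
  proof (induction rh)
    case Nil then show ?case using rr_pos[OF p] by simp
  next
    case (Cons e rh)
    show ?case unfolding Wr.simps by (rule mult_nonneg_nonneg[OF Cons.IH f])
  qed
  then show ?thesis by (simp add: W_def)
qed

lemma W_mart:
  assumes p: "0 < p" "p < 1"
    and supp: "\<And>t h a b e. e \<in> set_pmf (Q t h a b) \<Longrightarrow> arm e = a \<and> bt e = b"
  shows "(\<integral>\<^sup>+h. ennreal (W arm bt j p k h) \<partial>arun (EPg \<pi> Q j (1/2)) t) = ennreal (rr p ^ k)"
proof (induction t)
  case 0
  then show ?case by (simp add: W_def)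
next
  case (Suc t)
  define fac where "fac h e = (if arm e = j \<and> cnt arm j h < k then rho1 arm bt j p e / rr p else 1)" for h e
  have fac_nn: "0 \<le> fac h e" for h e
    using rho1_pos[OF p, of arm bt j e] rr_pos[OF p] by (auto simp: fac_def intro!: divide_nonneg_pos less_imp_le)
  have one: "(\<integral>\<^sup>+e. ennreal (fac h e) \<partial>EPg \<pi> Q j (1/2) t h) = 1" for h
  proof -
    have inner: "(\<integral>\<^sup>+b. (\<integral>\<^sup>+e. ennreal (fac h e) \<partial>Q t h a b) \<partial>bpmf j (1/2) a) = 1" for a
    proof -
      define g where "g b = (if a = j \<and> cnt arm j h < k then
          (if b then 1/(2*p) else 1/(2*(1-p))) / rr p else 1)" for b
      have g_nn: "0 \<le> g b" for b using p rr_pos[OF p] by (simp add: g_def)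
      have "(\<integral>\<^sup>+e. ennreal (fac h e) \<partial>Q t h a b) = ennreal (g b)" for b
      proof -
        have "(\<integral>\<^sup>+e. ennreal (fac h e) \<partial>Q t h a b) = (\<integral>\<^sup>+e. ennreal (g b) \<partial>Q t h a b)"
          by (intro nn_integral_cong_AE AE_pmfI) (use supp in \<open>auto simp: fac_def g_def rho1_def\<close>)
        then show ?thesis by simp
      qed
      then have "(\<integral>\<^sup>+b. (\<integral>\<^sup>+e. ennreal (fac h e) \<partial>Q t h a b) \<partial>bpmf j (1/2) a)
          = ennreal (g True) * ennreal (1/2) + ennreal (g False) * ennreal (1 - 1/2)"
        unfolding bpmf_def by (subst nn_integral_bernoulli_pmf) auto
      also have "\<dots> = ennreal (g True * (1/2)) + ennreal (g False * (1/2))"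
        by (subst (1 2) ennreal_mult) (use g_nn in auto)
      also have "\<dots> = ennreal (g True / 2 + g False / 2)"
        by (subst ennreal_plus[symmetric]) (use g_nn in auto)
      also have "g True / 2 + g False / 2 = 1"
      proof (cases "a = j \<and> cnt arm j h < k")
        case True
        have "p * (1 - p) > 0" using p by simp
        then show ?thesis using True p by (simp add: g_def rr_def field_simps)
      next
        case False
        then have "g b = 1" for b unfolding g_def by meson
        then show ?thesis by simp
      qed
      finally show ?thesis by simp
    qed
    show ?thesis unfolding EPg_def nn_integral_bind_pmf by (simp add: inner)
  qed
  have "(\<integral>\<^sup>+h. ennreal (W arm bt j p k h) \<partial>arun (EPg \<pi> Q j (1/2)) (Suc t))
     = (\<integral>\<^sup>+h. (\<integral>\<^sup>+e. ennreal (W arm bt j p k h) * ennreal (fac h e) \<partial>EPg \<pi> Q j (1/2) t h) \<partial>arun (EPg \<pi> Q j (1/2)) t)"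
    by (simp add: W_snoc fac_def[symmetric] ennreal_mult W_nonneg[OF p] fac_nn)
  also have "\<dots> = (\<integral>\<^sup>+h. ennreal (W arm bt j p k h) \<partial>arun (EPg \<pi> Q j (1/2)) t)"
    by (simp add: nn_integral_cmult one)
  finally show ?case using Suc.IH by simp
qed

lemma CoM:
  assumes p: "0 < p" "p < 1"
    and supp: "\<And>t h a b e. e \<in> set_pmf (Q t h a b) \<Longrightarrow> arm e = a \<and> bt e = b"
    and G: "\<And>h. h \<in> G \<Longrightarrow> cnt arm j h \<le> k"
  shows "measure_pmf.prob (arun (EPg \<pi> Q j (1/2)) t) G
           \<le> rr p ^ k * measure_pmf.prob (arun (EPg \<pi> Q j p) t) G + 1/4"
proof -
  define M0 where "M0 = arun (EPg \<pi> Q j (1/2)) t"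
  define Mp where "Mp = arun (EPg \<pi> Q j p) t"
  define B where "B = rr p ^ k"
  define \<rho> where "\<rho> = rho arm bt j p"
  have B1: "1 \<le> B" unfolding B_def using rr_ge1[OF p] by (simp add: one_le_power)
  have \<rho>pos: "0 < \<rho> h" for h unfolding \<rho>_def by (rule rho_pos[OF p])
  have e1: "emeasure M0 G = (\<integral>\<^sup>+h. ennreal (indicator G h * \<rho> h) \<partial>Mp)"
  proof -
    have "emeasure M0 G = (\<integral>\<^sup>+h. indicator G h \<partial>M0)" by simp
    also have "\<dots> = (\<integral>\<^sup>+h. indicator G h * ennreal (\<rho> h) \<partial>Mp)"
      unfolding M0_def Mp_def \<rho>_def by (rule CM_run[OF p supp])
    also have "\<dots> = (\<integral>\<^sup>+h. ennreal (indicator G h * \<rho> h) \<partial>Mp)"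
      by (intro nn_integral_cong) (simp split: split_indicator)
    finally show ?thesis .
  qed
  have pw: "ennreal (indicator G h * \<rho> h) \<le> ennreal B * indicator G h + ennreal (1/(4*B)) * ennreal (indicator G h * \<rho> h * \<rho> h)" for h
  proof (cases "h \<in> G")
    case True
    have "\<rho> h \<le> B + 1/(4*B) * (\<rho> h * \<rho> h)"
    proof -
      have "0 \<le> (\<rho> h - 2*B)^2" by simp
      then have "4*B*\<rho> h \<le> \<rho> h * \<rho> h + 4*B*B" by (simp add: power2_eq_square algebra_simps)
      then show ?thesis using B1 by (simp add: field_simps)
    qed
    then have "ennreal (\<rho> h) \<le> ennreal (B + 1/(4*B) * (\<rho> h * \<rho> h))" by (rule ennreal_leI)
    also have "\<dots> = ennreal B + ennreal (1/(4*B)) * ennreal (\<rho> h * \<rho> h)"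
    proof -
      have a: "ennreal (B + 1/(4*B) * (\<rho> h * \<rho> h)) = ennreal B + ennreal (1/(4*B) * (\<rho> h*\<rho> h))"
        using B1 by (intro ennreal_plus) auto
      have b: "ennreal (1/(4*B) * (\<rho> h*\<rho> h)) = ennreal (1/(4*B)) * ennreal (\<rho> h*\<rho> h)"
        using B1 by (intro ennreal_mult) auto
      show ?thesis unfolding a b ..
    qed
    finally show ?thesis using True by simp
  next
    case False then show ?thesis by simp
  qed
  have e3: "(\<integral>\<^sup>+h. ennreal (indicator G h * \<rho> h * \<rho> h) \<partial>Mp) = (\<integral>\<^sup>+h. ennreal (indicator G h * \<rho> h) \<partial>M0)"
  proof -
    have "(\<integral>\<^sup>+h. ennreal (indicator G h * \<rho> h) \<partial>M0) = (\<integral>\<^sup>+h. ennreal (indicator G h * \<rho> h) * ennreal (\<rho> h) \<partial>Mp)"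
      unfolding M0_def Mp_def \<rho>_def by (rule CM_run[OF p supp])
    also have "\<dots> = (\<integral>\<^sup>+h. ennreal (indicator G h * \<rho> h * \<rho> h) \<partial>Mp)"
      using \<rho>pos by (intro nn_integral_cong) (simp add: ennreal_mult' less_imp_le)
    finally show ?thesis by simp
  qed
  have e4: "(\<integral>\<^sup>+h. ennreal (indicator G h * \<rho> h) \<partial>M0) \<le> ennreal B"
  proof -
    have "(\<integral>\<^sup>+h. ennreal (indicator G h * \<rho> h) \<partial>M0) \<le> (\<integral>\<^sup>+h. ennreal (W arm bt j p k h) \<partial>M0)"
    proof (intro nn_integral_mono ennreal_leI)
      fix h show "indicator G h * \<rho> h \<le> W arm bt j p k h"
        using rho_le_W[OF p G, of h bt] W_nonneg[OF p, of arm bt j k h] unfolding \<rho>_def by (simp split: split_indicator)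
    qed
    also have "\<dots> = ennreal B" unfolding M0_def B_def by (rule W_mart[OF p supp])
    finally show ?thesis .
  qed
  have "emeasure M0 G \<le> (\<integral>\<^sup>+h. ennreal B * indicator G h + ennreal (1/(4*B)) * ennreal (indicator G h * \<rho> h * \<rho> h) \<partial>Mp)"
    unfolding e1 by (intro nn_integral_mono pw)
  also have "\<dots> = ennreal B * emeasure Mp G + ennreal (1/(4*B)) * (\<integral>\<^sup>+h. ennreal (indicator G h * \<rho> h) \<partial>M0)"
    by (simp add: nn_integral_add nn_integral_cmult e3[symmetric])
  also have "\<dots> \<le> ennreal B * emeasure Mp G + ennreal (1/(4*B)) * ennreal B"
    by (intro add_mono mult_left_mono e4) auto
  also have "\<dots> = ennreal (B * measure Mp G + 1/4)"
  proof -
    have a: "ennreal (1/(4*B)) * ennreal B = ennreal (1/4)"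
      using B1 by (subst ennreal_mult[symmetric]) auto
    have b: "ennreal B * emeasure Mp G = ennreal (B * measure Mp G)"
      using B1 by (simp add: measure_pmf.emeasure_eq_measure ennreal_mult)
    show ?thesis unfolding a b using B1 by (subst ennreal_plus) auto
  qed
  finally have "ennreal (measure M0 G) \<le> ennreal (B * measure Mp G + 1/4)"
    by (simp add: measure_pmf.emeasure_eq_measure)
  then show ?thesis unfolding M0_def Mp_def B_def
    by (subst (asm) ennreal_le_iff) (use B1 in \<open>auto intro!: add_nonneg_nonneg mult_nonneg_nonneg simp: B_def[symmetric] Mp_def[symmetric] M0_def[symmetric]\<close>)
qed

lemma arun_len: "h \<in> set_pmf (arun E t) \<Longrightarrow> length h = t"
  by (induction t arbitrary: h) auto

lemma sum_cnt_le: "finite J \<Longrightarrow> (\<Sum>j\<in>J. cnt arm j h) \<le> length h"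
proof (induction h)
  case Nil then show ?case by (simp add: cnt_def)
next
  case (Cons e h)
  have "(\<Sum>j\<in>J. cnt arm j (e # h)) = (\<Sum>j\<in>J. cnt arm j h) + (\<Sum>j\<in>J. if arm e = j then 1 else 0)"
  proof -
    have "cnt arm j (e # h) = cnt arm j h + (if arm e = j then 1 else 0)" for j by (simp add: cnt_def)
    then show ?thesis by (simp add: sum.distrib)
  qed
  also have "(\<Sum>j\<in>J. if arm e = j then 1 else 0) \<le> (1::nat)"
    using Cons.prems by (simp add: sum.If_cases)
  finally show ?case using Cons by simp
qed

lemma cnt_le_len: "cnt arm j h \<le> length h"
  by (simp add: cnt_def)

lemma pmf_two_le: "x \<noteq> y \<Longrightarrow> pmf M x + pmf M y \<le> 1"
proof -
  assume "x \<noteq> y"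
  then have "pmf M x + pmf M y = measure_pmf.prob M {x, y}"
    by (simp add: measure_measure_pmf_finite)
  also have "\<dots> \<le> 1" by simp
  finally show ?thesis .
qed

lemma bad_card:
  fixes \<pi>c :: "nat \<Rightarrow> 'e list \<Rightarrow> nat pmf"
  assumes n: "2 \<le> n" and kc: "T \<le> k \<or> (4 \<le> n \<and> 4 * T \<le> (k+1) * n)" and len: "length h = T"
  shows "real (card {j\<in>{..<n}. \<not> ((\<Sum>t<T. pmf (\<pi>c t (take t h)) j) \<le> real T / 2 \<and> cnt arm j h \<le> k)}) \<le> real n / 2"
proof -
  define S where "S j = (\<Sum>t<T. pmf (\<pi>c t (take t h)) j)" for j
  define A where "A = {j\<in>{..<n}. real T / 2 < S j}"
  define C where "C = {j\<in>{..<n}. k < cnt arm j h}"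
  have sub: "{j\<in>{..<n}. \<not> (S j \<le> real T / 2 \<and> cnt arm j h \<le> k)} \<subseteq> A \<union> C"
    by (auto simp: A_def C_def)
  have cA: "card A \<le> 1"
  proof -
    have "x = y" if "x \<in> A" "y \<in> A" for x y
    proof (rule ccontr)
      assume ne: "x \<noteq> y"
      have "S x + S y = (\<Sum>t<T. pmf (\<pi>c t (take t h)) x + pmf (\<pi>c t (take t h)) y)"
        by (simp add: S_def sum.distrib)
      also have "\<dots> \<le> (\<Sum>t<T. 1)" by (intro sum_mono pmf_two_le ne)
      finally show False using that by (simp add: A_def)
    qed
    then show ?thesis by (simp add: card_le_Suc0_iff_eq A_def)
  qed
  have cC: "card C * (k+1) \<le> T"
  proof -
    have "card C * (k+1) = (\<Sum>j\<in>C. k+1)" by simp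
    also have "\<dots> \<le> (\<Sum>j\<in>C. cnt arm j h)" by (intro sum_mono) (auto simp: C_def)
    also have "\<dots> \<le> length h" by (rule sum_cnt_le) (simp add: C_def)
    finally show ?thesis using len by simp
  qed
  have "card {j\<in>{..<n}. \<not> (S j \<le> real T / 2 \<and> cnt arm j h \<le> k)} \<le> card (A \<union> C)"
    by (intro card_mono sub) (auto simp: A_def C_def)
  also have "\<dots> \<le> card A + card C" by (rule card_Un_le)
  finally have c1: "card {j\<in>{..<n}. \<not> (S j \<le> real T / 2 \<and> cnt arm j h \<le> k)} \<le> card A + card C" .
  show ?thesis
  proof (cases "T \<le> k")
    case True
    have "\<forall>j. cnt arm j h \<le> k" using cnt_le_len[of arm _ h] len True by (metis order_trans)
    then have "C = {}" unfolding C_def using leD by blast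
    then show ?thesis using c1 cA n unfolding S_def by simp
  next
    case False
    with kc have n4: "4 \<le> n" and k4: "4 * T \<le> (k+1) * n" by auto
    have "(k+1) * (4 * card C) \<le> (k+1) * n" using cC k4 by (simp add: algebra_simps)
    then have "4 * card C \<le> n" by (subst (asm) mult_le_cancel1) simp
    then have "real (card A + card C) \<le> real n / 2" using cA n4 by simp
    then show ?thesis using c1 unfolding S_def
      by (meson of_nat_le_iff order_trans)
  qed
qed

lemma avg:
  fixes \<pi>c :: "nat \<Rightarrow> 'e list \<Rightarrow> nat pmf" and E :: "nat \<Rightarrow> 'e list \<Rightarrow> 'e pmf"
  assumes n: "2 \<le> n" and kc: "T \<le> k \<or> (4 \<le> n \<and> 4 * T \<le> (k+1) * n)"
  shows "\<exists>j<n. 1/2 \<le> measure_pmf.prob (arun E T)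
     {h. (\<Sum>t<T. pmf (\<pi>c t (take t h)) j) \<le> real T / 2 \<and> cnt arm j h \<le> k}"
proof (rule ccontr)
  define G where "G j = {h. (\<Sum>t<T. pmf (\<pi>c t (take t h)) j) \<le> real T / 2 \<and> cnt arm j h \<le> k}" for j
  define M where "M = arun E T"
  assume "\<not> ?thesis"
  then have lt: "measure_pmf.prob M (G j) < 1/2" if "j < n" for j using that by (auto simp: G_def M_def)
  have "(\<Sum>j<n. emeasure M (- G j)) = (\<integral>\<^sup>+h. (\<Sum>j<n. indicator (- G j) h) \<partial>M)"
    by (simp add: nn_integral_sum)
  also have "\<dots> \<le> (\<integral>\<^sup>+h. ennreal (real n / 2) \<partial>M)"
  proof (intro nn_integral_mono_AE AE_pmfI)
    fix h assume "h \<in> set_pmf M"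
    then have len: "length h = T" unfolding M_def by (rule arun_len)
    have "(\<Sum>j<n. indicator (- G j) h :: ennreal) = of_nat (card {j\<in>{..<n}. h \<notin> G j})"
      by (simp add: indicator_def sum.If_cases Int_def)
    also have "\<dots> = ennreal (real (card {j\<in>{..<n}. h \<notin> G j}))" by (simp add: ennreal_of_nat_eq_real_of_nat)
    also have "\<dots> \<le> ennreal (real n / 2)"
      using bad_card[OF n kc len, of \<pi>c arm] by (intro ennreal_leI) (simp add: G_def)
    finally show "(\<Sum>j<n. indicator (- G j) h :: ennreal) \<le> ennreal (real n / 2)" .
  qed
  also have "\<dots> = ennreal (real n / 2)" by simp
  finally have le: "(\<Sum>j<n. emeasure M (- G j)) \<le> ennreal (real n / 2)" .
  have "(\<Sum>j<n. emeasure M (- G j)) = ennreal (\<Sum>j<n. measure_pmf.prob M (- G j))"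
    by (simp add: measure_pmf.emeasure_eq_measure)
  with le have "(\<Sum>j<n. measure_pmf.prob M (- G j)) \<le> real n / 2"
    by (simp add: ennreal_le_iff sum_nonneg)
  moreover have "(\<Sum>j<n. measure_pmf.prob M (- G j)) > (\<Sum>j<n. (1/2::real))"
  proof (rule sum_strict_mono)
    show "finite {..<n}" by simp
    show "{..<n} \<noteq> {}" using n by (cases n) auto
    fix j assume "j \<in> {..<n}"
    then have "measure_pmf.prob M (G j) < 1/2" by (intro lt) simp
    moreover have "measure_pmf.prob M (- G j) = 1 - measure_pmf.prob M (G j)"
      using measure_pmf.prob_compl[of "G j" M] by (simp add: Compl_eq_Diff_UNIV)
    ultimately show "1/2 < measure_pmf.prob M (- G j)" by simp
  qed
  ultimately show False by simp
qed



definition bid :: "nat \<Rightarrow> nat \<Rightarrow> nat \<Rightarrow> nat" where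
  "bid H a h = (H+1)*(a+1) + h"

lemma bid_alt: "bid H a h = h + (a+1)*(H+1)"
  unfolding bid_def by simp

lemma bid_mod: "h \<le> H \<Longrightarrow> bid H a h mod (H+1) = h"
  unfolding bid_alt mod_mult_self1 by simp

lemma bid_div: "h \<le> H \<Longrightarrow> bid H a h div (H+1) = a + 1"
  unfolding bid_alt by (subst div_mult_self1) simp_all

lemma bid_gt: "H < bid H a h"
  unfolding bid_def by (simp add: add_increasing2 le_add1 trans_le_add1)

lemma bid_inj: "h \<le> H \<Longrightarrow> h' \<le> H \<Longrightarrow> bid H a h = bid H a' h' \<longleftrightarrow> a = a' \<and> h = h'"
  by (metis bid_div bid_mod add_right_cancel)

definition bitr :: "bool \<Rightarrow> real" where "bitr b = (if b then 1 else 0)"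

definition cx :: "nat \<Rightarrow> bool" where "cx s = ((s mod 4) div 2 = 1)"
definition cy :: "nat \<Rightarrow> bool" where "cy s = (s mod 2 = 1)"
definition coin :: "nat \<Rightarrow> nat \<Rightarrow> nat \<Rightarrow> bool" where
  "coin j a s = (if a = j then cy s else cx s)"

lemma coin_mod: "coin j a (4 * m + s mod 4) = coin j a s"
proof -
  have m4: "(4 * m + s mod 4) mod 4 = s mod 4" by simp
  have "(4 * m + s mod 4) mod 2 = (4 * m + s mod 4) mod 4 mod 2" by (rule mod_mod_cancel[symmetric]) simp
  also have "\<dots> = s mod 2" unfolding m4 by (rule mod_mod_cancel) simp
  finally show ?thesis using m4 by (simp add: coin_def cx_def cy_def)
qed

locale gm =
  fixes H d n r :: nat
  assumes H1: "1 \<le> H" and d1: "1 \<le> d" and dH: "d \<le> H" and n2: "2 \<le> n" and rd: "r = 0 \<or> 2 \<le> d"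
begin

abbreviation "P \<equiv> H - d"

definition Bset :: "nat set" where
  "Bset = {bid H a h | a h. a < n \<and> P + 2 \<le> h \<and> h \<le> H}"

definition IXs :: "nat set" where
  "IXs = {1..P+1} \<union> Bset"

definition leaf0 :: nat where "leaf0 = bid H 0 H"

definition S :: infostruct where
  "S = \<lparr> IX = IXs, ilev = (\<lambda>x. x mod (H+1)),
        iact = (\<lambda>x. if x = P+1 then {..<n} else if x = leaf0 then {..r} else {0}),
        ipar = (\<lambda>x. if x div (H+1) = 0 then (x - 1, 0)
                   else if x mod (H+1) = P + 2 then (P + 1, x div (H+1) - 1) else (x - 1, 0)) \<rparr>"

definition nxt :: "nat \<Rightarrow> nat \<Rightarrow> nat" where
  "nxt x a = (if x div (H+1) = 0 then (if x < P + 1 then x + 1 else bid H a (P+2)) else x + 1)"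

lemma P1_le: "P + 1 \<le> H" using d1 dH by simp

lemma pre_mod: "x \<le> H \<Longrightarrow> x mod (H+1) = x" by simp
lemma pre_div: "x \<le> H \<Longrightarrow> x div (H+1) = 0" by simp

lemma Bset_gt: "x \<in> Bset \<Longrightarrow> H < x"
  unfolding Bset_def using bid_gt by auto

lemma leaf0_ne: "leaf0 \<noteq> P + 1"
  using bid_gt[of H 0 H] P1_le unfolding leaf0_def by simp

lemma bid_succ: "h < H \<Longrightarrow> bid H a h + 1 = bid H a (h+1)"
  unfolding bid_def by simp

lemma nxt_ok:
  assumes x: "x \<in> IXs" and a: "a \<in> iact S x" and lv: "x mod (H+1) < H"
  shows "nxt x a \<in> IXs \<and> nxt x a mod (H+1) = x mod (H+1) + 1 \<and> ipar S (nxt x a) = (x, a)"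
proof (cases "x \<in> Bset")
  case True
  then obtain b h where x: "x = bid H b h" and b: "b < n" and h: "P + 2 \<le> h" "h \<le> H"
    unfolding Bset_def by auto
  have hH: "h < H" using lv x bid_mod[OF h(2)] by simp
  have xl: "x \<noteq> leaf0" using hH x bid_inj[OF h(2) order.refl, of b 0] unfolding leaf0_def by auto
  have "x \<noteq> P + 1" using bid_gt[of H b h] x P1_le by simp
  then have a0: "a = 0" using a xl by (simp add: S_def)
  have nx: "nxt x a = bid H b (h+1)"
    using x h bid_div[OF h(2)] bid_succ[OF hH] by (simp add: nxt_def)
  have "bid H b (h+1) \<in> Bset" unfolding Bset_def using b h hH by (intro CollectI exI[of _ b] exI[of _ "h+1"]) auto
  moreover have "bid H b (h+1) mod (H+1) = h + 1" using hH by (intro bid_mod) simp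
  moreover have "ipar S (bid H b (h+1)) = (x, a)"
  proof -
    have e: "bid H b (h+1) - 1 = x" using x bid_succ[OF hH, of b] by simp
    show ?thesis using hH h bid_div[of "h+1" H b] bid_mod[of "h+1" H b] e a0
      by (simp add: S_def)
  qed
  ultimately show ?thesis using nx x bid_mod[OF h(2)] by (simp add: IXs_def)
next
  case False
  then have x1: "x \<in> {1..P+1}" using x by (simp add: IXs_def)
  then have xH: "x \<le> H" using P1_le by simp
  show ?thesis
  proof (cases "x < P + 1")
    case True
    have "x \<noteq> leaf0" using xH bid_gt[of H 0 H] by (auto simp: leaf0_def)
    then have a0: "a = 0" using a True by (simp add: S_def)
    have nx: "nxt x a = x + 1" using True xH by (simp add: nxt_def)
    have "x + 1 \<le> H" using True P1_le by simp
    then show ?thesis using nx x1 True a0 xH by (simp add: IXs_def S_def)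
  next
    case False
    then have xP: "x = P + 1" using x1 by simp
    then have an: "a < n" using a by (simp add: S_def)
    have hh: "P + 2 \<le> H" using lv xP xH by simp
    have nx: "nxt x a = bid H a (P+2)" using xP P1_le by (simp add: nxt_def)
    have "bid H a (P+2) \<in> Bset" unfolding Bset_def using an hh by auto
    then show ?thesis using nx xP hh bid_mod[OF hh] bid_div[OF hh] P1_le
      by (simp add: IXs_def S_def)
  qed
qed

lemma finite_Bset: "finite Bset"
proof -
  have "Bset \<subseteq> (\<lambda>(a,h). bid H a h) ` ({..<n} \<times> {..H})" unfolding Bset_def by auto
  then show ?thesis by (rule finite_subset) auto
qed

lemma Bset_lev: "x \<in> Bset \<Longrightarrow> P + 2 \<le> x mod (H+1) \<and> x mod (H+1) \<le> H \<and> x div (H+1) \<ge> 1 \<and> x div (H+1) \<le> n"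
proof -
  assume "x \<in> Bset"
  then obtain a h where "x = bid H a h" "a < n" "P + 2 \<le> h" "h \<le> H" unfolding Bset_def by auto
  then show ?thesis using bid_mod[of h H a] bid_div[of h H a] by simp
qed

lemma wf_S: "wf_struct H S"
  unfolding wf_struct_def
proof (intro conjI ballI impI)
  show "finite (IX S)" using finite_Bset by (simp add: S_def IXs_def)
next
  fix x assume x: "x \<in> IX S"
  show "1 \<le> ilev S x" "ilev S x \<le> H" "finite (iact S x)" "iact S x \<noteq> {}"
    using x Bset_lev[of x] P1_le n2 by (auto simp: S_def IXs_def lessThan_empty_iff)
next
  fix x assume x: "x \<in> IX S" and l2: "2 \<le> ilev S x"
  have "fst (ipar S x) \<in> IX S \<and> ilev S (fst (ipar S x)) = ilev S x - 1 \<and> snd (ipar S x) \<in> iact S (fst (ipar S x))"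
  proof (cases "x \<in> Bset")
    case True
    then obtain b h where xb: "x = bid H b h" and b: "b < n" and h: "P + 2 \<le> h" "h \<le> H"
      unfolding Bset_def by auto
    show ?thesis
    proof (cases "h = P + 2")
      case True
      then show ?thesis using xb b h bid_mod[OF h(2)] bid_div[OF h(2)] P1_le
        by (simp add: S_def IXs_def)
    next
      case False
      have hm: "x - 1 = bid H b (h - 1)" using xb h False unfolding bid_def by simp
      have inB: "bid H b (h-1) \<in> Bset" unfolding Bset_def using b h False by force
      have "bid H b (h-1) \<noteq> P + 1" using bid_gt[of H b "h-1"] P1_le by simp
      then show ?thesis using xb b h bid_mod[OF h(2)] bid_div[OF h(2)] False hm inB
        bid_mod[of "h-1" H b]
        by (simp add: S_def IXs_def)
    qed
  next
    case False
    then have x1: "x \<in> {1..P+1}" using x by (simp add: S_def IXs_def)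
    have xH: "x \<le> H" using x1 P1_le by simp
    have "x - 1 \<noteq> leaf0" using bid_gt[of H 0 H] xH by (auto simp: leaf0_def)
    moreover have "x - 1 \<noteq> P + 1" using x1 by auto
    moreover have "x - 1 \<in> {1..P+1}"
    proof -
      have "x mod (H+1) = x" using xH by simp
      then have "2 \<le> x" using l2 by (simp add: S_def)
      then have "1 \<le> x - 1 \<and> x - 1 \<le> P + 1" using x1 unfolding atLeastAtMost_iff by linarith
      then show ?thesis by simp
    qed
    ultimately show ?thesis using x1 xH l2 by (simp add: S_def IXs_def)
  qed
  then show "fst (ipar S x) \<in> IX S" "ilev S (fst (ipar S x)) = ilev S x - 1" "snd (ipar S x) \<in> iact S (fst (ipar S x))"
    by auto
next
  fix x a assume x: "x \<in> IX S" and a: "a \<in> iact S x" and lv: "ilev S x < H"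
  have "x \<in> IXs" "x mod (H+1) < H" using x lv by (simp_all add: S_def)
  from nxt_ok[OF this(1) a this(2)]
  show "\<exists>x'\<in>IX S. ilev S x' = ilev S x + 1 \<and> ipar S x' = (x, a)"
    by (intro bexI[of _ "nxt x a"]) (auto simp: S_def)
qed


lemma card_Bset: "card Bset = n * (d - 1)"
proof -
  have eq: "Bset = (\<lambda>(a,h). bid H a h) ` ({..<n} \<times> {P+2..H})"
    unfolding Bset_def by fastforce
  have inj: "inj_on (\<lambda>(a,h). bid H a h) ({..<n} \<times> {P+2..H})"
    by (auto simp: inj_on_def bid_inj)
  have "card {P+2..H} = d - 1" using dH by simp
  then show ?thesis unfolding eq card_image[OF inj] by (simp add: card_cartesian_product)
qed

lemma num_act: "num_actions S = (H - d) + n * d + r"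
proof -
  have disj: "{1..P} \<inter> ({P+1} \<union> Bset) = {}" "{P+1} \<inter> Bset = {}"
    using Bset_gt P1_le by fastforce+
  have IXe: "IXs = {1..P} \<union> ({P+1} \<union> Bset)" unfolding IXs_def by auto
  define c where "c x = card (iact S x)" for x
  have "num_actions S = sum c IXs" by (simp add: num_actions_def S_def c_def)
  also have "\<dots> = sum c {1..P} + (c (P+1) + sum c Bset)"
    unfolding IXe using disj finite_Bset Bset_gt P1_le
    by (subst sum.union_disjoint) (auto simp: sum.union_disjoint)
  also have "sum c {1..P} = P"
  proof -
    have "c x = 1" if "x \<in> {1..P}" for x
    proof -
      have "x \<noteq> leaf0" using that bid_gt[of H 0 H] P1_le by (auto simp: leaf0_def)
      then show ?thesis using that by (simp add: c_def S_def)
    qed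
    then show ?thesis by simp
  qed
  also have "c (P+1) = n" by (simp add: c_def S_def)
  also have "sum c Bset = n * (d - 1) + r"
  proof -
    have cx: "c x = 1 + (if x = leaf0 then r else 0)" if "x \<in> Bset" for x
      using that Bset_gt[of x] P1_le by (simp add: c_def S_def)
    have "sum c Bset = (\<Sum>x\<in>Bset. 1 + (if x = leaf0 then r else 0))" by (simp add: cx)
    also have "\<dots> = card Bset + (\<Sum>x\<in>Bset. (if x = leaf0 then r else 0))"
      by (subst sum.distrib) simp
    also have "(\<Sum>x\<in>Bset. (if x = leaf0 then r else 0)) = (if leaf0 \<in> Bset then r else 0)"
      using finite_Bset by (simp add: sum.delta)
    also have "(if leaf0 \<in> Bset then r else 0) = r"
    proof (cases "r = 0")
      case False
      then have "2 \<le> d" using rd by simp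
      then have "leaf0 \<in> Bset" unfolding leaf0_def Bset_def using n2 dH
        by (intro CollectI exI[of _ 0] exI[of _ H]) auto
      then show ?thesis by simp
    qed simp
    finally show ?thesis using card_Bset by simp
  qed
  moreover have "n + n * (d - 1) = n * d" using d1 by (cases d) auto
  ultimately show ?thesis by simp
qed


definition gam :: "nat \<Rightarrow> real \<Rightarrow> game" where
  "gam j p = \<lparr> gstruct = S, obs = (\<lambda>s. s div 4),
     init = bind_pmf (bernoulli_pmf (1/2)) (\<lambda>x. bind_pmf (bernoulli_pmf p)
              (\<lambda>y. return_pmf (4 + 2 * (if x then 1 else 0) + (if y then 1 else 0)))),
     trans = (\<lambda>h s a. return_pmf (4 * nxt (s div 4) a + s mod 4)),
     rew = (\<lambda>h s a. if s div 4 div (H+1) = 0 then (if s div 4 = P + 1 then bitr (coin j a s) else 0)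
                    else bitr (coin j (s div 4 div (H+1) - 1) s)) \<rparr>"

lemma div4: "(4 * m + s mod 4) div 4 = (m::nat)" by simp

lemma wf_gam: "wf_game H (gam j p)"
  unfolding wf_game_def
proof (intro conjI allI impI ballI)
  show "wf_struct H (gstruct (gam j p))" using wf_S by (simp add: gam_def)
next
  fix s assume "s \<in> set_pmf (init (gam j p))"
  then have "s div 4 = 1" by (auto simp: gam_def)
  then show "obs (gam j p) s \<in> IX (gstruct (gam j p))" "ilev (gstruct (gam j p)) (obs (gam j p) s) = 1"
    using H1 by (auto simp: gam_def S_def IXs_def)
next
  fix h s a s' assume A: "obs (gam j p) s \<in> IX (gstruct (gam j p)) \<and> ilev (gstruct (gam j p)) (obs (gam j p) s) = h \<and> h < H \<and>
        a \<in> iact (gstruct (gam j p)) (obs (gam j p) s)"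
    and s': "s' \<in> set_pmf (trans (gam j p) h s a)"
  have s'e: "s' = 4 * nxt (s div 4) a + s mod 4" using s' by (simp add: gam_def)
  have "s div 4 \<in> IXs" "a \<in> iact S (s div 4)" "s div 4 mod (H+1) < H"
    using A by (auto simp: gam_def S_def)
  from nxt_ok[OF this]
  have "obs (gam j p) s' \<in> IX (gstruct (gam j p)) \<and>
           ilev (gstruct (gam j p)) (obs (gam j p) s') = h + 1 \<and>
           ipar (gstruct (gam j p)) (obs (gam j p) s') = (obs (gam j p) s, a)"
    using A s'e div4 by (simp add: gam_def S_def)
  then show "obs (gam j p) s' \<in> IX (gstruct (gam j p))" "ilev (gstruct (gam j p)) (obs (gam j p) s') = h + 1"
     "ipar (gstruct (gam j p)) (obs (gam j p) s') = (obs (gam j p) s, a)" by auto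
next
  fix h s a
  show "0 \<le> rew (gam j p) h s a" "rew (gam j p) h s a \<le> 1"
    by (auto simp: gam_def bitr_def)
qed

lemma num_gam: "num_actions (gstruct (gam j p)) = (H - d) + n * d + r"
  using num_act by (simp add: gam_def)


fun BT :: "policy \<Rightarrow> nat \<Rightarrow> bool \<Rightarrow> nat \<Rightarrow> nat \<Rightarrow> trace pmf" where
  "BT \<mu> a b h 0 = return_pmf []"
| "BT \<mu> a b h (Suc k) = (if k = 0 then map_pmf (\<lambda>a'. [(bid H a h, a', bitr b)]) (\<mu> (bid H a h))
      else map_pmf (\<lambda>t. (bid H a h, 0, bitr b) # t) (BT \<mu> a b (h+1) k))"

definition pre :: trace where "pre = map (\<lambda>i. (i, 0, 0)) [1..<P+1]"

definition Qg :: "policy \<Rightarrow> nat \<Rightarrow> bool \<Rightarrow> trace pmf" where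
  "Qg \<mu> a b = map_pmf (\<lambda>tl. pre @ (P+1, a, bitr b) # tl) (BT \<mu> a b (P+2) (d-1))"

lemma valid_single:
  assumes "valid_policy S \<mu>" "x \<in> IXs" "iact S x = {0}"
  shows "\<mu> x = return_pmf 0"
proof -
  have "set_pmf (\<mu> x) \<subseteq> iact S x" using assms(1,2) by (simp add: valid_policy_def S_def)
  then have "set_pmf (\<mu> x) \<subseteq> {0}" using assms(3) by simp
  then show ?thesis by (simp add: set_pmf_subset_singleton)
qed

lemma ep_branch:
  assumes v: "valid_policy S \<mu>" and a: "a < n"
  shows "P + 2 \<le> h \<Longrightarrow> h + k = H + 1 \<Longrightarrow> s div 4 = bid H a h \<Longrightarrow>
    ep (gam j p) \<mu> h k s = BT \<mu> a (coin j a s) h k"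
proof (induction k arbitrary: h s)
  case 0
  then show ?case by simp
next
  case (Suc k)
  have hH: "h \<le> H" using Suc.prems by simp
  have ob: "obs (gam j p) s = s div 4" by (simp add: gam_def)
  have rw: "rew (gam j p) h s a' = bitr (coin j a s)" for a'
    using Suc.prems bid_div[OF hH, of a] bid_gt[of H a h] by (simp add: gam_def)
  show ?case
  proof (cases "k = 0")
    case True
    then show ?thesis using Suc.prems rw ob by (simp add: map_pmf_def bind_return_pmf)
  next
    case False
    have hH': "h < H" using Suc.prems False by simp
    have xB: "bid H a h \<in> Bset" unfolding Bset_def using a Suc.prems hH by blast
    have "bid H a h \<noteq> leaf0" using bid_inj[OF hH order.refl, of a 0] hH' by (auto simp: leaf0_def)
    moreover have "bid H a h \<noteq> P + 1" using bid_gt[of H a h] P1_le by simp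
    ultimately have io: "iact S (bid H a h) = {0}" by (simp add: S_def)
    have mu: "\<mu> (bid H a h) = return_pmf 0"
      by (rule valid_single[OF v _ io]) (use xB in \<open>simp add: IXs_def\<close>)
    define s' where "s' = 4 * (bid H a (h+1)) + s mod 4"
    have tr: "trans (gam j p) h s 0 = return_pmf s'"
      using Suc.prems bid_div[OF hH, of a] bid_succ[OF hH'] by (simp add: gam_def nxt_def s'_def)
    have IH: "ep (gam j p) \<mu> (h+1) k s' = BT \<mu> a (coin j a s') (h+1) k"
      by (rule Suc.IH) (use Suc.prems in \<open>auto simp: s'_def\<close>)
    have cs: "coin j a s' = coin j a s" unfolding s'_def by (rule coin_mod)
    show ?thesis using False Suc.prems mu tr IH cs rw ob
      by (simp add: bind_return_pmf map_pmf_def gam_def[of j p, symmetric])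
  qed
qed


definition CH :: "nat \<Rightarrow> policy \<Rightarrow> nat \<Rightarrow> trace pmf" where
  "CH j \<mu> s = bind_pmf (\<mu> (P+1)) (\<lambda>a. map_pmf (\<lambda>tl. (P+1, a, bitr (coin j a s)) # tl)
       (BT \<mu> a (coin j a s) (P+2) (d-1)))"

lemma CH_mod: "CH j \<mu> (4 * m + s mod 4) = CH j \<mu> s"
  by (simp add: CH_def coin_mod)

lemma ep_pre:
  assumes v: "valid_policy S \<mu>"
  shows "P + 1 - h = m \<Longrightarrow> 1 \<le> h \<Longrightarrow> h \<le> P + 1 \<Longrightarrow> s div 4 = h \<Longrightarrow>
    ep (gam j p) \<mu> h (H + 1 - h) s = map_pmf (\<lambda>t. map (\<lambda>i. (i, 0, 0)) [h..<P+1] @ t) (CH j \<mu> s)"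
proof (induction m arbitrary: h s)
  case 0
  then have h: "h = P + 1" by simp
  have ob: "obs (gam j p) s = s div 4" by (simp add: gam_def)
  have kd: "H + 1 - h = Suc (d - 1)" using h d1 dH by simp
  have rw: "rew (gam j p) h s a = bitr (coin j a s)" for a
    using h 0 P1_le by (simp add: gam_def)
  have an: "a < n" if "a \<in> set_pmf (\<mu> (P+1))" for a
  proof -
    have "P + 1 \<in> IXs" by (simp add: IXs_def)
    then have "P + 1 \<in> IX S" by (simp add: S_def)
    then have "set_pmf (\<mu> (P+1)) \<subseteq> iact S (P+1)" using v unfolding valid_policy_def by blast
    moreover have "iact S (P+1) = {..<n}" by (simp add: S_def)
    ultimately have "set_pmf (\<mu> (P+1)) \<subseteq> {..<n}" by simp
    then show ?thesis using that by auto
  qed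
  have inner: "bind_pmf (if d - 1 = 0 then return_pmf [] else bind_pmf (trans (gam j p) h s a) (ep (gam j p) \<mu> (Suc h) (d - 1)))
       (\<lambda>rest. return_pmf ((obs (gam j p) s, a, rew (gam j p) h s a) # rest))
     = map_pmf (\<lambda>tl. (P+1, a, bitr (coin j a s)) # tl) (BT \<mu> a (coin j a s) (P+2) (d-1))"
    if a: "a \<in> set_pmf (\<mu> (P+1))" for a
  proof (cases "d - 1 = 0")
    case True
    then show ?thesis using ob rw h 0 by (simp add: map_pmf_def bind_return_pmf)
  next
    case False
    then have hh: "P + 2 \<le> H" using dH by simp
    define s' where "s' = 4 * bid H a (P+2) + s mod 4"
    have tr: "trans (gam j p) h s a = return_pmf s'"
      using h 0 P1_le by (simp add: gam_def nxt_def s'_def)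
    have "ep (gam j p) \<mu> (P+2) (d - 1) s' = BT \<mu> a (coin j a s') (P+2) (d-1)"
      by (rule ep_branch[OF v an[OF a]]) (use dH d1 False in \<open>auto simp: s'_def\<close>)
    moreover have "coin j a s' = coin j a s" unfolding s'_def by (rule coin_mod)
    ultimately show ?thesis using False tr ob rw h 0 by (simp add: map_pmf_def bind_return_pmf)
  qed
  have "ep (gam j p) \<mu> h (H + 1 - h) s = CH j \<mu> s"
    unfolding kd ep.simps CH_def using inner ob "0.prems" by (intro bind_pmf_cong) (simp_all add: h)
  then show ?case using h by (simp add: map_pmf_ident)
next
  case (Suc m)
  have hP: "h \<le> P" using Suc.prems by simp
  have hH: "h < H" using hP P1_le by simp
  have ob: "obs (gam j p) s = s div 4" by (simp add: gam_def)
  have "h \<noteq> leaf0" using bid_gt[of H 0 H] hH by (auto simp: leaf0_def)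
  then have io: "iact S h = {0}" using hP by (simp add: S_def)
  have mu: "\<mu> h = return_pmf 0"
    by (rule valid_single[OF v _ io]) (use Suc.prems in \<open>simp add: IXs_def\<close>)
  have kd: "H + 1 - h = Suc (H + 1 - Suc h)" and nz: "H + 1 - Suc h \<noteq> 0" using hH by simp_all
  have rw: "rew (gam j p) h s 0 = 0" using Suc.prems hP hH by (simp add: gam_def)
  define s' where "s' = 4 * (h + 1) + s mod 4"
  have tr: "trans (gam j p) h s 0 = return_pmf s'"
    using Suc.prems hP hH by (simp add: gam_def nxt_def s'_def)
  have IH: "ep (gam j p) \<mu> (h+1) (H + 1 - (h+1)) s' = map_pmf (\<lambda>t. map (\<lambda>i. (i, 0, 0)) [h+1..<P+1] @ t) (CH j \<mu> s')"
    by (rule Suc.IH) (use Suc.prems in \<open>auto simp: s'_def\<close>)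
  have ch: "CH j \<mu> s' = CH j \<mu> s" unfolding s'_def by (rule CH_mod)
  have up: "[h..<Suc P] = h # [Suc h..<Suc P]" using hP by (simp add: upt_rec)
  show ?case
    unfolding kd ep.simps using nz mu tr IH ch rw ob Suc.prems
    by (simp add: bind_return_pmf map_pmf_def bind_assoc_pmf up del: upt_Suc)
qed


lemma coin_init: "coin j a (4 + 2 * (if x then 1 else 0) + (if y then 1 else 0)) = (if a = j then y else x)"
  by (cases x; cases y) (simp_all add: coin_def cx_def cy_def)

lemma episode_eq:
  assumes v: "valid_policy S \<mu>"
  shows "episode H (gam j p) \<mu> = bind_pmf (\<mu> (P+1))
            (\<lambda>a. bind_pmf (bernoulli_pmf (if a = j then p else 1/2)) (\<lambda>b. Qg \<mu> a b))"
proof -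
  define f where "f x y = 4 + 2 * (if x then 1 else 0) + (if y then 1 else 0 :: nat)" for x y
  define M where "M = \<mu> (P+1)"
  have ep1: "ep (gam j p) \<mu> 1 H (f x y) = bind_pmf M (\<lambda>a. Qg \<mu> a (if a = j then y else x))" for x y
  proof -
    have "ep (gam j p) \<mu> 1 (H + 1 - 1) (f x y) = map_pmf (\<lambda>t. map (\<lambda>i. (i, 0, 0)) [1..<P+1] @ t) (CH j \<mu> (f x y))"
      by (rule ep_pre[OF v refl]) (auto simp: f_def)
    also have "\<dots> = bind_pmf M (\<lambda>a. Qg \<mu> a (coin j a (f x y)))"
      unfolding CH_def Qg_def M_def pre_def by (simp add: map_bind_pmf map_pmf_comp)
    finally show ?thesis by (simp add: f_def coin_init)
  qed
  have "episode H (gam j p) \<mu> = bind_pmf (bernoulli_pmf (1/2)) (\<lambda>x. bind_pmf (bernoulli_pmf p)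
       (\<lambda>y. bind_pmf M (\<lambda>a. Qg \<mu> a (if a = j then y else x))))"
    unfolding episode_def by (simp add: gam_def[of j p] bind_assoc_pmf bind_return_pmf f_def[symmetric] ep1[symmetric])
  also have "\<dots> = bind_pmf M (\<lambda>a. bind_pmf (bernoulli_pmf (1/2)) (\<lambda>x. bind_pmf (bernoulli_pmf p)
       (\<lambda>y. Qg \<mu> a (if a = j then y else x))))"
    by (subst bind_commute_pmf) (subst (2) bind_commute_pmf, rule refl)
  also have "\<dots> = bind_pmf M (\<lambda>a. bind_pmf (bernoulli_pmf (if a = j then p else 1/2)) (\<lambda>b. Qg \<mu> a b))"
  proof (intro bind_pmf_cong[OF refl])
    fix a
    show "bind_pmf (bernoulli_pmf (1/2)) (\<lambda>x. bind_pmf (bernoulli_pmf p) (\<lambda>y. Qg \<mu> a (if a = j then y else x)))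
        = bind_pmf (bernoulli_pmf (if a = j then p else 1/2)) (\<lambda>b. Qg \<mu> a b)"
      by (cases "a = j") simp_all
  qed
  finally show ?thesis by (simp add: M_def)
qed


definition armf :: "trace \<Rightarrow> nat" where "armf e = fst (snd (e ! P))"
definition btf :: "trace \<Rightarrow> bool" where "btf e = (snd (snd (e ! P)) = 1)"
definition sumrew :: "trace \<Rightarrow> real" where "sumrew e = sum_list (map (\<lambda>(x, a, r). r) e)"

lemma len_pre: "length pre = P" unfolding pre_def length_map length_upt by simp

lemma Qg_supp: "e \<in> set_pmf (Qg \<mu> a b) \<Longrightarrow> armf e = a \<and> btf e = b"
  by (auto simp: Qg_def armf_def btf_def nth_append len_pre bitr_def split: if_splits)

lemma BT_sum: "e \<in> set_pmf (BT \<mu> a b h k) \<Longrightarrow> sumrew e = real k * bitr b"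
proof (induction k arbitrary: h e)
  case 0 then show ?case by (simp add: sumrew_def)
next
  case (Suc k)
  show ?case
  proof (cases "k = 0")
    case True then show ?thesis using Suc.prems by (auto simp: sumrew_def)
  next
    case False
    then obtain t where "t \<in> set_pmf (BT \<mu> a b (h+1) k)" "e = (bid H a h, 0, bitr b) # t"
      using Suc.prems by auto
    then show ?thesis using Suc.IH[where h="h+1"] by (simp add: sumrew_def algebra_simps)
  qed
qed

lemma Qg_sum: "e \<in> set_pmf (Qg \<mu> a b) \<Longrightarrow> sumrew e = real d * bitr b"
proof -
  assume "e \<in> set_pmf (Qg \<mu> a b)"
  then obtain t where t: "t \<in> set_pmf (BT \<mu> a b (P+2) (d-1))" and e: "e = pre @ (P+1, a, bitr b) # t"
    by (auto simp: Qg_def)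
  have "sumrew pre = 0" by (simp add: sumrew_def pre_def o_def)
  moreover have "sumrew e = sumrew pre + bitr b + sumrew t" by (simp add: e sumrew_def)
  moreover have "sumrew t = real (d - 1) * bitr b" by (rule BT_sum[OF t])
  ultimately show ?thesis using d1 by (simp add: of_nat_diff algebra_simps)
qed

lemma val_eq:
  assumes v: "valid_policy S \<mu>" and j: "j < n" and p: "0 \<le> p" "p \<le> 1"
  shows "val H (gam j p) \<mu> = real d * (1/2 + (p - 1/2) * pmf (\<mu> (P+1)) j)"
proof -
  define M where "M = \<mu> (P+1)"
  have Mn: "set_pmf M \<subseteq> {..<n}"
  proof -
    have "P + 1 \<in> IX S" by (simp add: S_def IXs_def)
    then have "set_pmf M \<subseteq> iact S (P+1)" using v unfolding valid_policy_def M_def by blast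
    moreover have "iact S (P+1) = {..<n}" by (simp add: S_def)
    ultimately show ?thesis by simp
  qed
  define X where "X = bind_pmf M (\<lambda>a. bernoulli_pmf (if a = j then p else 1/2))"
  have ep: "episode H (gam j p) \<mu> = bind_pmf M (\<lambda>a. bind_pmf (bernoulli_pmf (if a = j then p else 1/2)) (\<lambda>b. Qg \<mu> a b))"
    unfolding M_def by (rule episode_eq[OF v])
  have "val H (gam j p) \<mu> = measure_pmf.expectation (episode H (gam j p) \<mu>) sumrew"
    by (simp add: val_def sumrew_def[abs_def])
  also have "\<dots> = measure_pmf.expectation (episode H (gam j p) \<mu>) (\<lambda>e. real d * bitr (btf e))"
    by (intro integral_cong_AE AE_pmfI) (auto simp: ep dest: Qg_supp Qg_sum)
  also have "\<dots> = measure_pmf.expectation (map_pmf btf (episode H (gam j p) \<mu>)) (\<lambda>b. real d * bitr b)"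
    by simp
  also have "map_pmf btf (episode H (gam j p) \<mu>) = X"
  proof -
    have "map_pmf btf (Qg \<mu> a b) = return_pmf b" for a b
    proof -
      have "map_pmf btf (Qg \<mu> a b) = map_pmf (\<lambda>_. b) (Qg \<mu> a b)"
        by (intro map_pmf_cong refl) (simp add: Qg_supp)
      then show ?thesis by simp
    qed
    then show ?thesis unfolding ep X_def by (simp add: map_bind_pmf bind_return_pmf')
  qed
  also have "measure_pmf.expectation X (\<lambda>b. real d * bitr b) = real d * bitr True * pmf X True"
    by (subst integral_measure_pmf_real[of "{True}"]) (auto simp: bitr_def split: if_splits)
  also have "pmf X True = measure_pmf.expectation M (\<lambda>a. if a = j then p else 1/2)"
    unfolding X_def pmf_bind using p by (intro Bochner_Integration.integral_cong refl) auto
  also have "\<dots> = (\<Sum>a\<in>{..<n}. (if a = j then p else 1/2) * pmf M a)"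
    using Mn by (subst integral_measure_pmf_real[of "{..<n}"]) auto
  also have "\<dots> = (\<Sum>a\<in>{..<n}. 1/2 * pmf M a + (if a = j then (p - 1/2) * pmf M a else 0))"
    by (intro sum.cong refl) (auto simp: algebra_simps)
  also have "\<dots> = 1/2 * (\<Sum>a\<in>{..<n}. pmf M a) + (p - 1/2) * pmf M j"
    using j by (simp add: sum.distrib sum_distrib_left)
  also have "(\<Sum>a\<in>{..<n}. pmf M a) = 1" using Mn by (intro sum_pmf_eq_1) auto
  finally show ?thesis by (simp add: M_def bitr_def)
qed


lemma valid_L: "valid_alg H L \<Longrightarrow> valid_policy S (L S t h)"
  using wf_S by (simp add: valid_alg_def)

lemma regret_ge:
  assumes vL: "valid_alg H L" and j: "j < n" and p: "1/2 \<le> p" "p \<le> 1"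
  shows "real d * (p - 1/2) * (real T - (\<Sum>t<T. pmf (L S t (take t hist) (P+1)) j))
           \<le> regret H (gam j p) L T hist"
proof -
  define V where "V = {\<mu>. valid_policy S \<mu>}"
  define v where "v t = val H (gam j p) (L S t (take t hist))" for t
  define f where "f \<mu> = (\<Sum>t<T. val H (gam j p) \<mu> - v t)" for \<mu>
  define \<mu>s :: policy where "\<mu>s x = return_pmf (if x = P + 1 then j else 0)" for x
  have vs: "\<mu>s \<in> V"
    unfolding V_def valid_policy_def using j by (auto simp: \<mu>s_def S_def)
  have valmax: "val H (gam j p) \<mu> \<le> real d * p" if "\<mu> \<in> V" for \<mu>
  proof -
    have "val H (gam j p) \<mu> = real d * (1/2 + (p - 1/2) * pmf (\<mu> (P+1)) j)"
      using that p j by (intro val_eq) (auto simp: V_def)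
    moreover have "(p - 1/2) * pmf (\<mu> (P+1)) j \<le> (p - 1/2) * 1"
      using p by (intro mult_left_mono pmf_le_1) auto
    then have "1/2 + (p - 1/2) * pmf (\<mu> (P+1)) j \<le> p" by simp
    then have "real d * (1/2 + (p - 1/2) * pmf (\<mu> (P+1)) j) \<le> real d * p"
      by (intro mult_left_mono) auto
    ultimately show ?thesis by simp
  qed
  have bdd: "bdd_above (f ` V)"
  proof (rule bdd_aboveI)
    fix y assume "y \<in> f ` V"
    then obtain \<mu> where "\<mu> \<in> V" "y = f \<mu>" by auto
    then show "y \<le> (\<Sum>t<T. real d * p - v t)" unfolding f_def
      using valmax[of \<mu>] by (auto intro!: sum_mono)
  qed
  have "f \<mu>s \<le> (SUP \<mu>\<in>V. f \<mu>)" by (rule cSUP_upper[OF vs bdd])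
  moreover have "regret H (gam j p) L T hist = (SUP \<mu>\<in>V. f \<mu>)"
    by (simp add: regret_def V_def f_def v_def gam_def)
  moreover have "f \<mu>s = real d * (p - 1/2) * (real T - (\<Sum>t<T. pmf (L S t (take t hist) (P+1)) j))"
  proof -
    have vals: "val H (gam j p) \<mu>s = real d * p"
      using val_eq[of \<mu>s j p] vs j p by (simp add: V_def \<mu>s_def algebra_simps)
    have vt: "v t = real d * (1/2 + (p - 1/2) * pmf (L S t (take t hist) (P+1)) j)" for t
      unfolding v_def using p j by (intro val_eq valid_L[OF vL]) auto
    have "f \<mu>s = (\<Sum>t<T. real d * (p - 1/2) * (1 - pmf (L S t (take t hist) (P+1)) j))"
      unfolding f_def vals vt by (intro sum.cong refl) (simp add: algebra_simps)
    also have "\<dots> = real d * (p - 1/2) * (real T - (\<Sum>t<T. pmf (L S t (take t hist) (P+1)) j))"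
      by (simp add: sum_distrib_left[symmetric] sum_subtractf)
    finally show ?thesis .
  qed
  ultimately show ?thesis by simp
qed

end



lemma EPg_half: "EPg \<pi> Q j (1/2) = EPg \<pi> Q j' (1/2)"
  by (intro ext) (simp add: EPg_def bpmf_def)

context gm begin

lemma run_eq:
  assumes vL: "valid_alg H L"
  shows "run H (gam j p) L t = arun (EPg (\<lambda>t h. L S t h (P+1)) (\<lambda>t h a b. Qg (L S t h) a b) j p) t"
proof (induction t)
  case 0 then show ?case by simp
next
  case (Suc t)
  have "episode H (gam j p) (L S t h) = EPg (\<lambda>t h. L S t h (P+1)) (\<lambda>t h a b. Qg (L S t h) a b) j p t h" for h
    unfolding EPg_def bpmf_def by (rule episode_eq[OF valid_L[OF vL]])
  then show ?case using Suc by (simp add: gam_def[of j p])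
qed

lemma key:
  assumes vL: "valid_alg H L" and e: "0 < \<epsilon>" "\<epsilon> \<le> 1/4"
    and kc: "T \<le> k \<or> (4 \<le> n \<and> 4 * T \<le> (k+1) * n)"
  shows "\<exists>j<n. (1 - 4 * \<epsilon>^2)^k / 4 \<le> measure_pmf.prob (run H (gam j (1/2 + \<epsilon>)) L T)
            {hist. real d * \<epsilon> * real T / 2 \<le> regret H (gam j (1/2 + \<epsilon>)) L T hist}"
proof -
  define PP where "PP = (\<lambda>t h. L S t h (P+1))"
  define Qt where "Qt = (\<lambda>t h a b. Qg (L S t h) a b)"
  define p where "p = 1/2 + \<epsilon>"
  have p: "0 < p" "p < 1" using e by (auto simp: p_def)
  have supp: "\<And>t h a b e. e \<in> set_pmf (Qt t h a b) \<Longrightarrow> armf e = a \<and> btf e = b"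
    unfolding Qt_def by (rule Qg_supp)
  obtain j where j: "j < n" and G: "1/2 \<le> measure_pmf.prob (arun (EPg PP Qt 0 (1/2)) T)
     {h. (\<Sum>t<T. pmf (PP t (take t h)) j) \<le> real T / 2 \<and> cnt armf j h \<le> k}"
    using avg[OF n2 kc, of "EPg PP Qt 0 (1/2)" PP armf] by blast
  define G where "G = {h. (\<Sum>t<T. pmf (PP t (take t h)) j) \<le> real T / 2 \<and> cnt armf j h \<le> k}"
  have "measure_pmf.prob (arun (EPg PP Qt j (1/2)) T) G \<le> rr p ^ k * measure_pmf.prob (arun (EPg PP Qt j p) T) G + 1/4"
    by (rule CoM[OF p supp]) (auto simp: G_def)
  moreover have "arun (EPg PP Qt j (1/2)) T = arun (EPg PP Qt 0 (1/2)) T"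
    by (simp only: EPg_half[of PP Qt j 0])
  ultimately have "1/4 \<le> rr p ^ k * measure_pmf.prob (arun (EPg PP Qt j p) T) G"
    using G unfolding G_def by simp
  moreover have rrp: "rr p = 1 / (1 - 4 * \<epsilon>^2)"
    by (simp add: rr_def p_def power2_eq_square algebra_simps)
  moreover have pos: "0 < 1 - 4 * \<epsilon>^2"
  proof -
    have "\<epsilon>^2 \<le> (1/4)^2" using e by (intro power_mono) auto
    then have "\<epsilon>^2 \<le> 1/16" by (simp add: power2_eq_square)
    then show ?thesis by simp
  qed
  ultimately have Gp: "(1 - 4 * \<epsilon>^2)^k / 4 \<le> measure_pmf.prob (arun (EPg PP Qt j p) T) G"
    by (simp add: field_simps power_divide)
  have run: "run H (gam j p) L T = arun (EPg PP Qt j p) T"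
    unfolding PP_def Qt_def by (rule run_eq[OF vL])
  have sub: "G \<subseteq> {hist. real d * \<epsilon> * real T / 2 \<le> regret H (gam j p) L T hist}"
  proof
    fix h assume "h \<in> G"
    then have s: "(\<Sum>t<T. pmf (L S t (take t h) (P+1)) j) \<le> real T / 2" by (simp add: G_def PP_def)
    have "real d * \<epsilon> * real T / 2 \<le> real d * (p - 1/2) * (real T - (\<Sum>t<T. pmf (L S t (take t h) (P+1)) j))"
    proof -
      have "real T / 2 \<le> real T - (\<Sum>t<T. pmf (L S t (take t h) (P+1)) j)" using s by simp
      then have "real d * \<epsilon> * (real T / 2) \<le> real d * \<epsilon> * (real T - (\<Sum>t<T. pmf (L S t (take t h) (P+1)) j))"
        by (intro mult_left_mono) (use e in auto)
      then show ?thesis by (simp add: p_def)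
    qed
    also have "\<dots> \<le> regret H (gam j p) L T h"
      using p e by (intro regret_ge[OF vL j]) (auto simp: p_def)
    finally show "h \<in> {hist. real d * \<epsilon> * real T / 2 \<le> regret H (gam j p) L T hist}" by simp
  qed
  have "measure_pmf.prob (arun (EPg PP Qt j p) T) G
      \<le> measure_pmf.prob (run H (gam j p) L T) {hist. real d * \<epsilon> * real T / 2 \<le> regret H (gam j p) L T hist}"
    unfolding run by (rule measure_pmf.finite_measure_mono[OF sub]) simp
  then show ?thesis using Gp j by (auto simp: p_def)
qed

end



lemma exp_part:
  fixes \<delta> \<epsilon> kr :: real
  assumes d: "0 < \<delta>" "\<delta> < 1/4" and x: "4 * \<epsilon>^2 \<le> 1/2"
    and kr: "kr * \<epsilon>^2 \<le> ln (1 / (4 * \<delta>)) / 16"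
    and k: "real k \<le> kr"
  shows "4 * \<delta> < (1 - 4 * \<epsilon>^2) ^ k"
proof -
  define x where "x = 4 * \<epsilon>^2"
  define ll where "ll = ln (1 / (4 * \<delta>))"
  have x0: "0 \<le> x" "x \<le> 1/2" using x by (auto simp: x_def)
  have lpos: "0 < ll" unfolding ll_def using d by simp
  have l4: "ln (4 * \<delta>) = - ll" unfolding ll_def using d by (simp add: ln_div)
  have lnx: "- 2 * x \<le> ln (1 - x)"
  proof -
    have "- x - 2 * x^2 \<le> ln (1 - x)" by (rule ln_one_minus_pos_lower_bound) (use x0 in auto)
    moreover have "x * (2 * x) \<le> x * 1" using x0 by (intro mult_left_mono) auto
    then have "2 * x^2 \<le> x" by (simp add: power2_eq_square algebra_simps)
    ultimately show ?thesis by linarith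
  qed
  have pos: "0 < 1 - x" using x0 by simp
  have "ln ((1 - x) ^ k) = real k * ln (1 - x)" using pos by (simp add: ln_realpow)
  also have "\<dots> \<ge> real k * (- 2 * x)" by (intro mult_left_mono lnx) auto
  moreover have "real k * (- 2 * x) \<ge> kr * (- 2 * x)"
    using k x0 by (intro mult_right_mono_neg) auto
  moreover have "kr * (- 2 * x) = - 8 * (kr * \<epsilon>^2)" by (simp add: x_def)
  moreover have "- 8 * (kr * \<epsilon>^2) \<ge> - ll / 2" using kr unfolding ll_def by simp
  ultimately have "ln ((1 - x) ^ k) > ln (4 * \<delta>)" using l4 lpos by linarith
  then show ?thesis using d pos by (simp add: x_def ln_less_cancel_iff)
qed

lemma sqrt_part:
  fixes X Z c :: real
  assumes "0 \<le> c" "0 \<le> X" "0 \<le> Z" "c^2 * X \<le> Z^2"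
  shows "c * sqrt X \<le> Z"
proof -
  have "c * sqrt X = sqrt (c^2 * X)" using assms by (simp add: real_sqrt_mult)
  also have "\<dots> \<le> sqrt (Z^2)" by (rule real_sqrt_le_mono) (rule assms(4))
  also have "\<dots> = Z" using assms by simp
  finally show ?thesis .
qed

lemma common:
  assumes g: "gm H d n r" and vL: "valid_alg H L" and dl: "0 < \<delta>" "\<delta> < 1/4"
    and T: "0.4 * real n * ln (1 / (4 * \<delta>)) \<le> real T"
    and AX: "AX = (H - d) + n * d + r" and AXH: "H < AX"
    and ar: "(real AX - real H) * min (real AX - real H) (real H) \<le> 4 * (real d)^2 * real n"
  shows "\<exists>g. wf_game H g \<and> num_actions (gstruct g) = AX \<and>
           measure_pmf.prob (run H g L T)
             {hist. regret H g L T hist \<ge>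
                1/32 * sqrt ((real AX - real H) * min (real AX - real H) (real H) * real T
                          * ln (1 / (4 * \<delta>)))} > \<delta>"
proof -
  interpret gm H d n r by (rule g)
  define ll where "ll = ln (1 / (4 * \<delta>))"
  have ll: "0 < ll" unfolding ll_def using dl by simp
  have n2': "2 \<le> real n" using n2 by simp
  have Tpos: "0 < real T"
  proof -
    have "0 < 0.4 * real n * ll" using ll n2' by simp
    then show ?thesis using T unfolding ll_def by linarith
  qed
  define \<epsilon> where "\<epsilon> = sqrt (real n * ll / (64 * real T))"
  have e2: "\<epsilon>^2 = real n * ll / (64 * real T)" unfolding \<epsilon>_def using ll Tpos by simp
  have epos: "0 < \<epsilon>" unfolding \<epsilon>_def using ll Tpos n2' by simp
  have nlT: "real n * ll \<le> 8 * real T"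
  proof -
    have "0 \<le> real n * ll" using ll by simp
    then show ?thesis using T unfolding ll_def by linarith
  qed
  have x: "4 * \<epsilon>^2 \<le> 1/2"
  proof -
    have "4 * \<epsilon>^2 = (real n * ll) / (16 * real T)" unfolding e2 by simp
    also have "\<dots> \<le> (8 * real T) / (16 * real T)" using nlT Tpos by (intro divide_right_mono) auto
    also have "\<dots> = 1/2" using Tpos by simp
    finally show ?thesis .
  qed
  have e4: "\<epsilon> \<le> 1/4"
  proof (rule ccontr)
    assume "\<not> \<epsilon> \<le> 1/4"
    then have "(1/4)^2 < \<epsilon>^2" by (intro power_strict_mono) auto
    moreover have "\<epsilon>^2 \<le> 1/16"
    proof -
      have "0 \<le> real n * ll" using ll by simp
      then have "real n * ll \<le> 4 * real T" using T unfolding ll_def by linarith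
      then have "real n * ll / (64 * real T) \<le> (4 * real T) / (64 * real T)" using Tpos by (intro divide_right_mono) auto
      then show ?thesis unfolding e2 using Tpos by simp
    qed
    ultimately show False unfolding power2_eq_square by linarith
  qed
  define k where "k = (if n \<le> 3 then T else 4 * T div n)"
  have kc: "T \<le> k \<or> (4 \<le> n \<and> 4 * T \<le> (k+1) * n)"
  proof (cases "n \<le> 3")
    case True then show ?thesis by (simp add: k_def)
  next
    case False
    have "4 * T = (4 * T div n) * n + 4 * T mod n" by simp
    moreover have "4 * T mod n < n" using n2 by simp
    moreover have "(4 * T div n + 1) * n = 4 * T div n * n + n" by (simp add: algebra_simps)
    ultimately have "4 * T \<le> (4 * T div n + 1) * n" by linarith
    then show ?thesis using False by (simp add: k_def)
  qed
  define kr where "kr = 4 * real T / real n"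
  have kkr: "real k \<le> kr"
  proof (cases "n \<le> 3")
    case True
    then have "real n \<le> 4" by simp
    then have "real T * real n \<le> 4 * real T" using Tpos by (simp add: mult_left_mono)
    then show ?thesis using True n2' by (simp add: k_def kr_def field_simps)
  next
    case False
    then show ?thesis unfolding k_def kr_def using of_nat_div_le_of_nat[of "4 * T" n] by simp
  qed
  have krl: "kr * \<epsilon>^2 \<le> ln (1 / (4 * \<delta>)) / 16"
  proof -
    have "kr * \<epsilon>^2 = (4 * real T / real n) * (real n * ll / (64 * real T))" unfolding e2 kr_def ..
    also have "\<dots> = ll / 16" using Tpos n2' by simp
    finally show ?thesis unfolding ll_def by simp
  qed
  have big: "4 * \<delta> < (1 - 4 * \<epsilon>^2) ^ k" by (rule exp_part[OF dl x krl kkr])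
  obtain j where j: "j < n" and pr: "(1 - 4 * \<epsilon>^2)^k / 4 \<le> measure_pmf.prob (run H (gam j (1/2 + \<epsilon>)) L T)
            {hist. real d * \<epsilon> * real T / 2 \<le> regret H (gam j (1/2 + \<epsilon>)) L T hist}"
    using key[OF vL epos e4 kc] by blast
  define g where "g = gam j (1/2 + \<epsilon>)"
  define X where "X = (real AX - real H) * min (real AX - real H) (real H) * real T * ln (1 / (4 * \<delta>))"
  have X0: "0 \<le> X" unfolding X_def ll_def[symmetric] using AXH ll by simp
  have tgt: "1/32 * sqrt X \<le> real d * \<epsilon> * real T / 2"
  proof (rule sqrt_part)
    show "0 \<le> real d * \<epsilon> * real T / 2" using epos by simp
    have "(real d * \<epsilon> * real T / 2)^2 = (real d)^2 * real n * ll * real T / 256"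
    proof -
      have "(real d * \<epsilon> * real T / 2)^2 = (real d)^2 * \<epsilon>^2 * (real T)^2 / 4"
        by (simp add: power_mult_distrib power_divide)
      also have "\<dots> = (real d)^2 * (real n * ll / (64 * real T)) * (real T)^2 / 4" unfolding e2 ..
      also have "\<dots> = (real d)^2 * real n * ll * real T / 256"
        using Tpos by (simp add: power2_eq_square)
      finally show ?thesis .
    qed
    moreover have "(1/32)^2 * X \<le> (real d)^2 * real n * ll * real T / 256"
    proof -
      have "X = ((real AX - real H) * min (real AX - real H) (real H)) * (real T * ll)"
        unfolding X_def ll_def by simp
      also have "\<dots> \<le> (4 * (real d)^2 * real n) * (real T * ll)"
        by (intro mult_right_mono ar) (use ll Tpos in simp)
      finally show ?thesis by (simp add: power2_eq_square algebra_simps)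
    qed
    ultimately show "(1/32)^2 * X \<le> (real d * \<epsilon> * real T / 2)^2" by simp
  qed (use X0 in auto)
  have sub: "{hist. real d * \<epsilon> * real T / 2 \<le> regret H g L T hist}
      \<subseteq> {hist. 1/32 * sqrt X \<le> regret H g L T hist}" using tgt by auto
  have "\<delta> < measure_pmf.prob (run H g L T) {hist. real d * \<epsilon> * real T / 2 \<le> regret H g L T hist}"
    using big pr unfolding g_def by simp
  also have "\<dots> \<le> measure_pmf.prob (run H g L T) {hist. 1/32 * sqrt X \<le> regret H g L T hist}"
    by (rule measure_pmf.finite_measure_mono[OF sub]) simp
  finally have "\<delta> < measure_pmf.prob (run H g L T) {hist. 1/32 * sqrt X \<le> regret H g L T hist}" .
  moreover have "wf_game H g" unfolding g_def by (rule wf_gam)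
  moreover have "num_actions (gstruct g) = AX" unfolding g_def num_gam AX ..
  ultimately show ?thesis unfolding X_def by blast
qed

theorem mainTheorem11:
  "\<exists>c::real. c > 0 \<and>
     (\<forall>(H::nat) (T::nat) (AX::nat) (\<delta>::real) (L::algorithm).
        1 \<le> H \<longrightarrow> AX > H \<longrightarrow> 0 < \<delta> \<longrightarrow> \<delta> < 1/4 \<longrightarrow>
        real T \<ge> 0.4 * real (if AX \<ge> 2 * H then AX div H else 2) * ln (1 / (4 * \<delta>)) \<longrightarrow>
        valid_alg H L \<longrightarrow>
        (\<exists>g. wf_game H g \<and> num_actions (gstruct g) = AX \<and>
           measure_pmf.prob (run H g L T)
             {hist. regret H g L T hist \<ge>
                c * sqrt ((real AX - real H) * min (real AX - real H) (real H) * real T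
                          * ln (1 / (4 * \<delta>)))} > \<delta>))"
proof (intro exI[of _ "1/32::real"] conjI allI impI)
  show "(0::real) < 1/32" by simp
next
  fix H T AX :: nat and \<delta> :: real and L :: algorithm
  assume H1: "1 \<le> H" and AXH: "H < AX" and d0: "0 < \<delta>" and d1: "\<delta> < 1/4"
    and T: "real T \<ge> 0.4 * real (if AX \<ge> 2 * H then AX div H else 2) * ln (1 / (4 * \<delta>))"
    and vL: "valid_alg H L"
  show "\<exists>g. wf_game H g \<and> num_actions (gstruct g) = AX \<and>
           measure_pmf.prob (run H g L T)
             {hist. regret H g L T hist \<ge>
                1/32 * sqrt ((real AX - real H) * min (real AX - real H) (real H) * real T
                          * ln (1 / (4 * \<delta>)))} > \<delta>"
  proof (cases "2 * H \<le> AX")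
    case True
    define n where "n = AX div H"
    define r where "r = AX mod H"
    have n2: "2 \<le> n"
    proof -
      have "2 * H div H \<le> AX div H" using True by (rule div_le_mono)
      then show ?thesis using H1 by (simp add: n_def)
    qed
    have rd: "r = 0 \<or> 2 \<le> H" using H1 by (cases "H = 1") (auto simp: r_def)
    have g: "gm H H n r" by unfold_locales (use H1 n2 rd in auto)
    have AXe: "AX = (H - H) + n * H + r" by (simp add: n_def r_def)
    have Tn: "0.4 * real n * ln (1 / (4 * \<delta>)) \<le> real T" using T True by (simp add: n_def)
    have ar: "(real AX - real H) * min (real AX - real H) (real H) \<le> 4 * (real H)^2 * real n"
    proof -
      have rl: "r < H" using H1 by (simp add: r_def)
      have "AX \<le> (n + 1) * H" using AXe rl by (simp add: algebra_simps)
      then have ax: "real AX \<le> (real n + 1) * real H" by (metis of_nat_le_iff of_nat_mult of_nat_Suc Suc_eq_plus1 add.commute of_nat_add of_nat_1)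
      have "(real AX - real H) * min (real AX - real H) (real H) \<le> (real AX - real H) * real H"
        using AXH by (intro mult_left_mono) auto
      also have "\<dots> \<le> real n * real H * real H" using ax by (intro mult_right_mono) (auto simp: algebra_simps)
      also have "\<dots> \<le> 4 * (real H)^2 * real n" by (simp add: power2_eq_square)
      finally show ?thesis .
    qed
    show ?thesis by (rule common[OF g vL d0 d1 Tn AXe AXH ar])
  next
    case False
    define dd where "dd = AX - H"
    have g: "gm H dd 2 0" by unfold_locales (use H1 AXH False in \<open>auto simp: dd_def\<close>)
    have AXe: "AX = (H - dd) + 2 * dd + 0" using AXH False by (simp add: dd_def)
    have Tn: "0.4 * real 2 * ln (1 / (4 * \<delta>)) \<le> real T" using T False by simp
    have ar: "(real AX - real H) * min (real AX - real H) (real H) \<le> 4 * (real dd)^2 * real (2::nat)"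
    proof -
      have e: "real AX - real H = real dd" using AXH by (simp add: dd_def of_nat_diff)
      have "real dd \<le> real H" using False by (simp add: dd_def)
      then show ?thesis unfolding e by (simp add: power2_eq_square)
    qed
    show ?thesis by (rule common[OF g vL d0 d1 Tn AXe AXH ar])
  qed
qed


end
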